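(* Let $F$ be a field, let $G$ be a bipartite graph on $n$ vertices, and let $k\ge 2$ be an integer. If $\mathcal{I}_F(G)\neq\emptyset$, then $$f(G\Box C_{2k})=n.$$
   Context: All graphs are finite and simple. For a graph $H$ with a perfect matching $M$, a subset $S\subseteq M$ is a forcing set of $M$ if $S$ is contained in no other perfect matching of $H$; the forcing number $f(H,M)$ is the minimum size of a forcing set of $M$, and the minimum forcing number $f(H)$ is the minimum of $f(H,M)$ over all perfect matchings $M$ of $H$. A weighted adjacency matrix of a graph $G$ over a field $F$ is a matrix over $F$ with rows and columns indexed by $V(G)$ whose $(u,v)$ entry is nonzero if and only if $u$ and $v$ are adjacent in $G$. A matrix $A$ is involutory if $A^{-1}=A$ (i.e. $A^2=I$). $\mathcal{I}_F(G)$ denotes the set of weighted adjacency matrices of $G$ over $F$ that are involutory. $C_{2k}$ is the cycle on $2k$ vertices. The Cartesian product $G\Box H$ has vertex set $V(G)\times V(H)$, with $(g_1,h_1)$ and $(g_2,h_2)$ adjacent iff either $g_1=g_2$ and $h_1h_2\in E(H)$, or $h_1=h_2$ and $g_1g_2\in E(G)$. *)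

theory Defs
  imports Main
begin

type_synonym 'a graph = "'a set \<times> 'a set set"

definition verts :: "'a graph \<Rightarrow> 'a set" where "verts G = fst G"
definition edges :: "'a graph \<Rightarrow> 'a set set" where "edges G = snd G"

definition simple_graph :: "'a graph \<Rightarrow> bool" where
  "simple_graph G \<longleftrightarrow> finite (verts G) \<and>
     (\<forall>e\<in>edges G. \<exists>u v. u \<noteq> v \<and> u \<in> verts G \<and> v \<in> verts G \<and> e = {u, v})"

definition adjacent :: "'a graph \<Rightarrow> 'a \<Rightarrow> 'a \<Rightarrow> bool" where
  "adjacent G u v \<longleftrightarrow> {u, v} \<in> edges G"

definition bipartite :: "'a graph \<Rightarrow> bool" where
  "bipartite G \<longleftrightarrow> (\<exists>A B. A \<union> B = verts G \<and> A \<inter> B = {} \<and>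
     (\<forall>e\<in>edges G. \<exists>a b. a \<in> A \<and> b \<in> B \<and> e = {a, b}))"

definition perfect_matching :: "'a graph \<Rightarrow> 'a set set \<Rightarrow> bool" where
  "perfect_matching G M \<longleftrightarrow> M \<subseteq> edges G \<and> (\<forall>v\<in>verts G. \<exists>!e. e \<in> M \<and> v \<in> e)"

definition forcing_set :: "'a graph \<Rightarrow> 'a set set \<Rightarrow> 'a set set \<Rightarrow> bool" where
  "forcing_set G M S \<longleftrightarrow> S \<subseteq> M \<and>
     (\<forall>M'. perfect_matching G M' \<and> S \<subseteq> M' \<longrightarrow> M' = M)"

definition forcing_number :: "'a graph \<Rightarrow> 'a set set \<Rightarrow> nat" where
  "forcing_number G M = Min {card S | S. forcing_set G M S}"

definition min_forcing_number :: "'a graph \<Rightarrow> nat" where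
  "min_forcing_number G = Min {forcing_number G M | M. perfect_matching G M}"

text \<open>Weighted adjacency matrices over a field (matrices indexed by V, given as
  functions whose values outside V x V are irrelevant), and involutory ones.\<close>

definition weighted_adjacency :: "'a graph \<Rightarrow> ('a \<Rightarrow> 'a \<Rightarrow> 'f::field) \<Rightarrow> bool" where
  "weighted_adjacency G A \<longleftrightarrow>
     (\<forall>u\<in>verts G. \<forall>v\<in>verts G. A u v \<noteq> 0 \<longleftrightarrow> adjacent G u v)"

definition involutory :: "'a set \<Rightarrow> ('a \<Rightarrow> 'a \<Rightarrow> 'f::field) \<Rightarrow> bool" where
  "involutory V A \<longleftrightarrow>
     (\<forall>u\<in>V. \<forall>v\<in>V. (\<Sum>w\<in>V. A u w * A w v) = (if u = v then 1 else 0))"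

definition involutory_wadj :: "'a graph \<Rightarrow> ('a \<Rightarrow> 'a \<Rightarrow> 'f::field) set" where
  "involutory_wadj G = {A. weighted_adjacency G A \<and> involutory (verts G) A}"

definition cart_prod :: "'a graph \<Rightarrow> 'b graph \<Rightarrow> ('a \<times> 'b) graph" where
  "cart_prod G H =
     (verts G \<times> verts H,
      {{(g, h1), (g, h2)} | g h1 h2. g \<in> verts G \<and> {h1, h2} \<in> edges H} \<union>
      {{(g1, h), (g2, h)} | g1 g2 h. {g1, g2} \<in> edges G \<and> h \<in> verts H})"

definition cycle :: "nat \<Rightarrow> nat graph" where
  "cycle m = ({0..<m}, {{i, (i + 1) mod m} | i. i < m})"

end

theory Submission
  imports Defs "HOL-Computational_Algebra.Polynomial"
begin


lemma pm_unique:
  assumes "perfect_matching H M" "v \<in> verts H" "e1 \<in> M" "e2 \<in> M" "v \<in> e1" "v \<in> e2"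
  shows "e1 = e2"
  using assms unfolding perfect_matching_def by blast

lemma simple_edge:
  assumes "simple_graph H" "e \<in> edges H"
  obtains u v where "u \<noteq> v" "u \<in> verts H" "v \<in> verts H" "e = {u, v}"
  using assms unfolding simple_graph_def by blast

lemma pm_mate:
  assumes "simple_graph H" "perfect_matching H M" "v \<in> verts H"
  shows "\<exists>u. {v, u} \<in> M \<and> u \<noteq> v \<and> u \<in> verts H"
proof -
  from assms obtain e where e: "e \<in> M" "v \<in> e" unfolding perfect_matching_def by blast
  then have "e \<in> edges H" using assms(2) unfolding perfect_matching_def by auto
  then obtain a b where "a \<noteq> b" "a \<in> verts H" "b \<in> verts H" "e = {a, b}"
    using assms(1) simple_edge by metis
  then show ?thesis using e
  proof (cases "v = a")
    case True then show ?thesis using \<open>e = {a, b}\<close> e \<open>a \<noteq> b\<close> \<open>b \<in> verts H\<close> by (intro exI[of _ b]) auto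
  next
    case False then have "v = b" using \<open>e = {a, b}\<close> e by auto
    then show ?thesis using \<open>e = {a, b}\<close> e \<open>a \<noteq> b\<close> \<open>a \<in> verts H\<close> by (intro exI[of _ a]) (auto simp: insert_commute)
  qed
qed

lemma flip:
  fixes H :: "'v graph" and W :: "'v \<Rightarrow> 'v \<Rightarrow> 'r::idom"
  assumes sg: "simple_graph H"
    and pm: "perfect_matching H M" and SM: "S \<subseteq> M"
    and side: "\<And>u v. {u,v} \<in> edges H \<Longrightarrow> (u \<in> Sd \<longleftrightarrow> v \<notin> Sd)"
    and Wnz: "\<And>u v. u \<in> verts H \<Longrightarrow> v \<in> verts H \<Longrightarrow> W u v \<noteq> 0 \<Longrightarrow> {u,v} \<in> edges H"
    and Wedge: "\<And>u v. {u,v} \<in> edges H \<Longrightarrow> W u v \<noteq> 0"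
    and xs: "\<And>v. x v \<noteq> 0 \<Longrightarrow> v \<in> verts H \<and> v \<in> Sd \<and> v \<notin> \<Union>S"
    and xnz: "x zz \<noteq> 0"
    and ker: "\<And>u. u \<in> verts H \<Longrightarrow> (\<Sum>v\<in>verts H. W u v * x v) = 0"
  shows "\<exists>M'. perfect_matching H M' \<and> S \<subseteq> M' \<and> M' \<noteq> M"
proof -
  let ?V = "verts H"
  have finV: "finite ?V" using sg unfolding simple_graph_def by auto
  have ME: "M \<subseteq> edges H" using pm unfolding perfect_matching_def by auto
  define m where "m v = (SOME u. {v, u} \<in> M \<and> u \<noteq> v \<and> u \<in> ?V)" for v
  have m: "{v, m v} \<in> M \<and> m v \<noteq> v \<and> m v \<in> ?V" if "v \<in> ?V" for v
    unfolding m_def using someI_ex[OF pm_mate[OF sg pm that]] .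
  have m_uniq: "u = m v" if "v \<in> ?V" "{v, u} \<in> M" for u v
  proof -
    have "{v, u} = {v, m v}" using pm_unique[OF pm that(1) that(2) m[OF that(1), THEN conjunct1]] by auto
    then show ?thesis by (auto simp: doubleton_eq_iff)
  qed
  have m_side: "m v \<notin> Sd" if "v \<in> ?V" "v \<in> Sd" for v
    using side[of v "m v"] m[OF that(1)] ME that by auto
  define Z where "Z = {v. x v \<noteq> 0}"
  have Z: "v \<in> ?V" "v \<in> Sd" "v \<notin> \<Union>S" if "v \<in> Z" for v using xs that unfolding Z_def by auto
  have finZ: "finite Z" using finV Z(1) by (meson rev_finite_subset subsetI)
  have succ: "\<exists>u. u \<in> ?V \<and> u \<noteq> z \<and> W (m z) u \<noteq> 0 \<and> x u \<noteq> 0" if "z \<in> Z" for z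
  proof (rule ccontr)
    assume "\<not> ?thesis"
    then have 0: "\<forall>u\<in>?V - {z}. W (m z) u * x u = 0" by auto
    have zV: "z \<in> ?V" using Z that by auto
    have "(\<Sum>u\<in>?V. W (m z) u * x u) = W (m z) z * x z + (\<Sum>u\<in>?V - {z}. W (m z) u * x u)"
      using finV zV by (simp add: sum.remove)
    also have "(\<Sum>u\<in>?V - {z}. W (m z) u * x u) = 0" by (rule sum.neutral) (use 0 in blast)
    finally have "(\<Sum>u\<in>?V. W (m z) u * x u) = W (m z) z * x z" by simp
    moreover have "W (m z) z \<noteq> 0"
      using Wedge[of "m z" z] m[OF zV] ME by (auto simp: insert_commute)
    moreover have "x z \<noteq> 0" using that unfolding Z_def by auto
    ultimately show False using ker[of "m z"] m[OF zV] by auto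
  qed
  define f where "f z = (SOME u. u \<in> ?V \<and> u \<noteq> z \<and> W (m z) u \<noteq> 0 \<and> x u \<noteq> 0)" for z
  have f: "f z \<in> ?V \<and> f z \<noteq> z \<and> W (m z) (f z) \<noteq> 0 \<and> f z \<in> Z" if "z \<in> Z" for z
    unfolding f_def Z_def using someI_ex[OF succ[OF that]] by auto
  have fedge: "{m z, f z} \<in> edges H" if "z \<in> Z" for z
    using Wnz[of "m z" "f z"] f[OF that] m Z that by auto
  have fpow: "(f ^^ i) z \<in> Z" if "z \<in> Z" for z i
    by (induction i) (use that f in auto)
  define C where "C = {z \<in> Z. \<exists>p>0. (f ^^ p) z = z}"
  have zzZ: "zz \<in> Z" using xnz unfolding Z_def by auto
  have Cne: "C \<noteq> {}"
  proof -
    have "\<not> inj_on (\<lambda>i. (f ^^ i) zz) {0..card Z}"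
    proof
      assume inj: "inj_on (\<lambda>i. (f ^^ i) zz) {0..card Z}"
      have "(\<lambda>i. (f ^^ i) zz) ` {0..card Z} \<subseteq> Z" using fpow zzZ by auto
      from card_mono[OF finZ this] card_image[OF inj] show False by simp
    qed
    then obtain i j where ij: "i < j" "(f ^^ i) zz = (f ^^ j) zz"
      unfolding inj_on_def by (metis linorder_neqE_nat)
    have e: "(f ^^ (j - i + i)) zz = (f ^^ (j - i)) ((f ^^ i) zz)" by (simp add: funpow_add)
    have "j - i + i = j" using ij by simp
    then have "(f ^^ (j - i)) ((f ^^ i) zz) = (f ^^ i) zz" using e ij by simp
    then have "(f ^^ i) zz \<in> C" using ij fpow[OF zzZ] unfolding C_def
      by (intro CollectI conjI exI[of _ "j - i"]) auto
    then show ?thesis by auto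
  qed
  have CZ: "C \<subseteq> Z" unfolding C_def by auto
  have fC: "f c \<in> C" if "c \<in> C" for c
  proof -
    from that obtain p where p: "p > 0" "(f ^^ p) c = c" "c \<in> Z" unfolding C_def by auto
    have "(f ^^ p) (f c) = f ((f ^^ p) c)" by (metis comp_apply funpow_swap1)
    then show ?thesis using p f unfolding C_def by auto
  qed
  have f_onto: "\<exists>c\<in>C. f c = d" if "d \<in> C" for d
  proof -
    from that obtain p where p: "p > 0" "(f ^^ p) d = d" "d \<in> Z" unfolding C_def by auto
    have pC: "(f ^^ i) d \<in> C" for i by (induction i) (use that fC in auto)
    have "f ((f ^^ (p - 1)) d) = (f ^^ p) d"
      using p(1) by (metis Suc_diff_1 comp_apply funpow.simps(2))
    then show ?thesis using pC p by auto
  qed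
  have f_inj: "a = b" if "a \<in> C" "b \<in> C" "f a = f b" for a b
  proof -
    from that obtain p q where p: "p > 0" "(f ^^ p) a = a" and q: "q > 0" "(f ^^ q) b = b"
      unfolding C_def by auto
    have per: "(f ^^ (r * n)) y = y" if "(f ^^ r) y = y" for r n y
    proof (induction n)
      case (Suc n)
      have "(f ^^ (r * Suc n)) y = (f ^^ r) ((f ^^ (r * n)) y)" by (simp add: funpow_add)
      then show ?case using Suc that by simp
    qed simp
    have pa: "(f ^^ (p * q)) a = a" using per[OF p(2)] .
    have qb: "(f ^^ (p * q)) b = b" using per[OF q(2), of p] by (simp add: mult.commute)
    have "p * q > 0" using p q by auto
    then obtain r where r: "p * q = Suc r" by (metis gr0_implies_Suc)
    have "(f ^^ (p*q)) a = (f ^^ r) (f a)" unfolding r by (simp add: funpow_swap1)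
    moreover have "(f ^^ (p*q)) b = (f ^^ r) (f b)" unfolding r by (simp add: funpow_swap1)
    ultimately show ?thesis using pa qb that(3) by simp
  qed
  define R where "R = {{c, m c} | c. c \<in> C}"
  define N where "N = {{m c, f c} | c. c \<in> C}"
  define M' where "M' = (M - R) \<union> N"
  have CV: "c \<in> ?V" "c \<in> Sd" if "c \<in> C" for c using Z CZ that by auto
  have m_inj: "a = b" if "a \<in> ?V" "b \<in> ?V" "m a = m b" for a b
  proof -
    have "{a, m a} = {b, m b}"
      using pm_unique[OF pm m[OF that(1), THEN conjunct2, THEN conjunct2], of "{a, m a}" "{b, m b}"]
        m[OF that(1)] m[OF that(2)] that(3) by auto
    then show ?thesis using that(3) m[OF that(1)] by (auto simp: doubleton_eq_iff)
  qed
  have M'E: "M' \<subseteq> edges H" unfolding M'_def N_def using ME fedge CZ by auto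
  have cover: "\<exists>e. e \<in> M' \<and> v \<in> e" if vV: "v \<in> ?V" for v
  proof (cases "v \<in> C")
    case True
    then obtain c where "c \<in> C" "f c = v" using f_onto by blast
    then show ?thesis unfolding M'_def N_def by blast
  next
    case False
    show ?thesis
    proof (cases "\<exists>c\<in>C. v = m c")
      case True
      then obtain c where "c \<in> C" "v = m c" by auto
      then show ?thesis unfolding M'_def N_def by blast
    next
      case False2: False
      have "{v, m v} \<notin> R"
      proof
        assume "{v, m v} \<in> R"
        then obtain c where c: "c \<in> C" "{v, m v} = {c, m c}" unfolding R_def by auto
        then have "v = c \<or> v = m c" by (auto simp: doubleton_eq_iff)
        then show False using c False False2 by auto
      qed
      then show ?thesis using m[OF vV] unfolding M'_def by blast
    qed
  qed
  have uniq: "e1 = e2" if vV: "v \<in> ?V" and e: "e1 \<in> M'" "e2 \<in> M'" "v \<in> e1" "v \<in> e2" for v e1 e2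
  proof -
    have oldnew: False if o: "e1 \<in> M - R" "v \<in> e1" and n: "c \<in> C" "v \<in> {m c, f c}" for e1 c
    proof -
      have cV: "c \<in> ?V" using CV n by auto
      from n have "v = m c \<or> v = f c" by auto
      then show False
      proof
        assume "v = m c"
        then have "e1 = {c, m c}" using pm_unique[OF pm vV, of e1 "{c, m c}"] o m[OF cV] by auto
        then show False using o n unfolding R_def by auto
      next
        assume v: "v = f c"
        have fcC: "f c \<in> C" using fC n by auto
        have fV: "f c \<in> ?V" using CV fcC by auto
        have "e1 = {f c, m (f c)}" using pm_unique[OF pm vV, of e1 "{f c, m (f c)}"] o m[OF fV] v by auto
        then show False using o fcC unfolding R_def by auto
      qed
    qed
    have newnew: "{m c, f c} = {m d, f d}" if "c \<in> C" "d \<in> C" "v \<in> {m c, f c}" "v \<in> {m d, f d}" for c d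
    proof (cases "v \<in> Sd")
      case True
      have "v \<noteq> m c" "v \<noteq> m d" using m_side CV that True by blast+
      then have "f c = f d" using that by auto
      then show ?thesis using f_inj that by auto
    next
      case False
      have "v \<noteq> f c" "v \<noteq> f d" using CV fC that False by blast+
      then have "m c = m d" using that by auto
      then have "c = d" using m_inj CV that by auto
      then show ?thesis by simp
    qed
    show ?thesis
    proof (cases "e1 \<in> N")
      case True
      then obtain c where c: "c \<in> C" "e1 = {m c, f c}" unfolding N_def by auto
      show ?thesis
      proof (cases "e2 \<in> N")
        case True
        then obtain d where d: "d \<in> C" "e2 = {m d, f d}" unfolding N_def by auto
        have "v \<in> {m c, f c}" "v \<in> {m d, f d}" using e c d by auto
        from newnew[OF c(1) d(1) this] show ?thesis using c(2) d(2) by simp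
      next
        case False
        then have "e2 \<in> M - R" using e unfolding M'_def by auto
        moreover have "v \<in> {m c, f c}" using e c by auto
        ultimately show ?thesis using oldnew[of e2 c] c(1) e(4) by blast
      qed
    next
      case False
      then have o1: "e1 \<in> M - R" using e unfolding M'_def by auto
      show ?thesis
      proof (cases "e2 \<in> N")
        case True
        then obtain d where d: "d \<in> C" "e2 = {m d, f d}" unfolding N_def by auto
        moreover have "v \<in> {m d, f d}" using e d by auto
        ultimately show ?thesis using oldnew[of e1 d] o1 e(3) by blast
      next
        case False
        then have "e2 \<in> M - R" using e unfolding M'_def by auto
        then show ?thesis using pm_unique[OF pm vV, of e1 e2] o1 e(3,4) by blast
      qed
    qed
  qed
  have pm': "perfect_matching H M'"
    unfolding perfect_matching_def
  proof (intro conjI ballI M'E)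
    fix v assume vV: "v \<in> ?V"
    obtain e where e: "e \<in> M'" "v \<in> e" using cover[OF vV] by blast
    show "\<exists>!e. e \<in> M' \<and> v \<in> e"
      by (rule ex1I[of _ e]) (use e uniq[OF vV] in auto)
  qed
  have SM': "S \<subseteq> M'"
  proof
    fix s assume s: "s \<in> S"
    have "s \<notin> R"
    proof
      assume "s \<in> R"
      then obtain c where c: "c \<in> C" "s = {c, m c}" unfolding R_def by auto
      then have "c \<in> \<Union>S" using s by auto
      then show False using Z CZ c by auto
    qed
    then show "s \<in> M'" using s SM unfolding M'_def by auto
  qed
  obtain c where c: "c \<in> C" using Cne by auto
  have cV: "c \<in> ?V" using CV c by auto
  have "{m c, f c} \<notin> M"
  proof
    assume a: "{m c, f c} \<in> M"
    have "{m c, f c} = {c, m c}"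
      using pm_unique[OF pm m[OF cV, THEN conjunct2, THEN conjunct2], of "{m c, f c}" "{c, m c}"] a m[OF cV] by auto
    then have "f c = c \<or> f c = m c" by (auto simp: doubleton_eq_iff)
    moreover have "f c \<noteq> c" using f CZ c by auto
    moreover have "f c \<noteq> m c" using m_side[OF cV] CV fC c by metis
    ultimately show False by auto
  qed
  moreover have "{m c, f c} \<in> M'" unfolding M'_def N_def using c by auto
  ultimately have "M' \<noteq> M" by auto
  then show ?thesis using pm' SM' by auto
qed

lemma dep_lemma:
  fixes v :: "'i \<Rightarrow> 't \<Rightarrow> 'r::idom"
  assumes "finite T" "finite I" "card T < card I"
  shows "\<exists>c. (\<exists>i\<in>I. c i \<noteq> 0) \<and> (\<forall>t\<in>T. (\<Sum>i\<in>I. c i * v i t) = 0)"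
  using assms
proof (induction T arbitrary: I v rule: finite_induct)
  case empty
  then have "I \<noteq> {}" by auto
  then show ?case by (intro exI[of _ "\<lambda>_. 1"]) auto
next
  case (insert t T)
  show ?case
  proof (cases "\<forall>i\<in>I. v i t = 0")
    case True
    from insert.IH[of I v] insert.prems insert.hyps obtain c where
      c: "\<exists>i\<in>I. c i \<noteq> 0" "\<forall>t\<in>T. (\<Sum>i\<in>I. c i * v i t) = 0" by auto
    show ?thesis using c True by (intro exI[of _ c]) auto
  next
    case False
    then obtain i0 where i0: "i0 \<in> I" "v i0 t \<noteq> 0" by auto
    define I' where "I' = I - {i0}"
    define v' where "v' i s = v i0 t * v i s - v i t * v i0 s" for i s
    have fI': "finite I'" using insert.prems unfolding I'_def by auto
    have cI': "card T < card I'" using insert.prems insert.hyps i0 unfolding I'_def by auto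
    from insert.IH[OF fI' cI', of v'] obtain c' where
      c': "\<exists>i\<in>I'. c' i \<noteq> 0" "\<forall>s\<in>T. (\<Sum>i\<in>I'. c' i * v' i s) = 0" by auto
    define c where "c i = (if i = i0 then - (\<Sum>j\<in>I'. c' j * v j t) else c' i * v i0 t)" for i
    have key: "(\<Sum>i\<in>I. c i * v i s) = (\<Sum>i\<in>I'. c' i * v' i s)" for s
    proof -
      have "(\<Sum>i\<in>I. c i * v i s) = c i0 * v i0 s + (\<Sum>i\<in>I'. c i * v i s)"
        unfolding I'_def using i0 insert.prems by (simp add: sum.remove)
      also have "(\<Sum>i\<in>I'. c i * v i s) = (\<Sum>i\<in>I'. c' i * v i0 t * v i s)"
        by (rule sum.cong) (auto simp: c_def I'_def)
      also have "c i0 * v i0 s = - (\<Sum>j\<in>I'. c' j * v j t * v i0 s)"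
        by (simp add: c_def sum_distrib_right)
      finally show ?thesis
        by (simp add: v'_def algebra_simps sum_subtractf sum_distrib_left)
    qed
    show ?thesis
    proof (intro exI[of _ c] conjI)
      from c'(1) obtain i where i: "i \<in> I'" "c' i \<noteq> 0" by auto
      then have "c i = c' i * v i0 t" "i \<in> I" by (auto simp: c_def I'_def)
      then show "\<exists>i\<in>I. c i \<noteq> 0" using i i0 by (intro bexI[of _ i]) auto
      show "\<forall>s\<in>insert t T. (\<Sum>i\<in>I. c i * v i s) = 0"
      proof
        fix s assume "s \<in> insert t T"
        then show "(\<Sum>i\<in>I. c i * v i s) = 0"
        proof
          assume "s = t"
          then show ?thesis unfolding key by (simp add: v'_def mult.commute)
        next
          assume "s \<in> T" then show ?thesis unfolding key using c'(2) by auto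
        qed
      qed
    qed
  qed
qed




locale cpsetup =
  fixes G :: "'a graph" and X Y :: "'a set" and A :: "'a \<Rightarrow> 'a \<Rightarrow> 'f::field" and k :: nat
  assumes sg: "simple_graph G" and XY: "X \<union> Y = verts G" and XYd: "X \<inter> Y = {}"
    and bipE: "\<forall>e\<in>edges G. \<exists>a b. a \<in> X \<and> b \<in> Y \<and> e = {a, b}"
    and k2: "k \<ge> 2"
    and wadj: "weighted_adjacency G A" and invo: "involutory (verts G) A"
begin

abbreviation "V \<equiv> verts G"
abbreviation "H \<equiv> cart_prod G (cycle (2*k))"
definition nx :: "nat \<Rightarrow> nat" where "nx i = (if Suc i = 2*k then 0 else Suc i)"
definition pv :: "nat \<Rightarrow> nat" where "pv i = (if i = 0 then 2*k - 1 else i - 1)"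

lemma finV: "finite V" using sg unfolding simple_graph_def by auto

lemma vertsH: "verts H = V \<times> {0..<2*k}"
  unfolding cart_prod_def cycle_def verts_def by simp

lemma nx_mod: "i < 2*k \<Longrightarrow> Suc i mod (2*k) = nx i"
  unfolding nx_def by (auto simp: mod_Suc)

lemma edgesC: "{i, j} \<in> edges (cycle (2*k)) \<longleftrightarrow> i < 2*k \<and> j < 2*k \<and> (j = nx i \<or> i = nx j)"
proof -
  have "{i, j} \<in> edges (cycle (2*k)) \<longleftrightarrow> (\<exists>i0. {i, j} = {i0, nx i0} \<and> i0 < 2*k)"
    unfolding cycle_def edges_def using nx_mod by (auto, metis nx_mod)
  also have "\<dots> \<longleftrightarrow> i < 2*k \<and> j < 2*k \<and> (j = nx i \<or> i = nx j)"
    using k2 by (auto simp: doubleton_eq_iff nx_def)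
  finally show ?thesis .
qed

lemma nx_lt: "i < 2*k \<Longrightarrow> nx i < 2*k" using k2 unfolding nx_def by auto
lemma pv_lt: "i < 2*k \<Longrightarrow> pv i < 2*k" using k2 unfolding pv_def by auto
lemma nx_pv: "i < 2*k \<Longrightarrow> nx (pv i) = i" using k2 unfolding nx_def pv_def by auto
lemma pv_nx: "i < 2*k \<Longrightarrow> pv (nx i) = i" using k2 unfolding nx_def pv_def by auto
lemma nx_eq_iff: "i < 2*k \<Longrightarrow> j < 2*k \<Longrightarrow> j = nx i \<longleftrightarrow> i = pv j"
  using nx_pv pv_nx by auto
lemma nx_ne: "i < 2*k \<Longrightarrow> nx i \<noteq> i" using k2 unfolding nx_def by auto
lemma pv_ne: "i < 2*k \<Longrightarrow> pv i \<noteq> i" using k2 unfolding pv_def by auto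
lemma nx_ne_pv: "i < 2*k \<Longrightarrow> nx i \<noteq> pv i" using k2 unfolding nx_def pv_def by auto
lemma even_nx: "i < 2*k \<Longrightarrow> even (nx i) \<longleftrightarrow> odd i" using k2 unfolding nx_def by (auto; presburger)
lemma even_pv: "i < 2*k \<Longrightarrow> even (pv i) \<longleftrightarrow> odd i" using k2 unfolding pv_def by (auto; presburger)

lemma Gedge: assumes "{g, g'} \<in> edges G"
  shows "g \<noteq> g'" "g \<in> V" "g' \<in> V" "g \<in> X \<longleftrightarrow> g' \<notin> X"
proof -
  obtain u v where "u \<noteq> v" "u \<in> V" "v \<in> V" "{g, g'} = {u, v}"
    using simple_edge[OF sg assms] by blast
  then show "g \<noteq> g'" "g \<in> V" "g' \<in> V" by (auto simp: doubleton_eq_iff)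
  obtain a b where "a \<in> X" "b \<in> Y" "{g, g'} = {a, b}" using bipE assms by blast
  then show "g \<in> X \<longleftrightarrow> g' \<notin> X" using XYd by (auto simp: doubleton_eq_iff)
qed

lemma Aiff: "g \<in> V \<Longrightarrow> g' \<in> V \<Longrightarrow> A g g' \<noteq> 0 \<longleftrightarrow> {g, g'} \<in> edges G"
  using wadj unfolding weighted_adjacency_def adjacent_def by auto

lemma Adiag: "g \<in> V \<Longrightarrow> A g g = 0"
  using Aiff[of g g] Gedge(1)[of g g] by auto

lemma Ainv: "g \<in> V \<Longrightarrow> g' \<in> V \<Longrightarrow> (\<Sum>w\<in>V. A g w * A w g') = (if g = g' then 1 else 0)"
  using invo unfolding involutory_def by auto

lemma edgesH_raw: "edges H = {{(g, h1), (g, h2)} | g h1 h2. g \<in> V \<and> {h1, h2} \<in> edges (cycle (2*k))} \<union>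
      {{(g1, h), (g2, h)} | g1 g2 h. {g1, g2} \<in> edges G \<and> h \<in> {0..<2*k}}"
  unfolding cart_prod_def edges_def[of "(_, _)"] snd_conv by (simp add: cycle_def verts_def)

lemma edgesH: "{(g, i), (g', j)} \<in> edges H \<longleftrightarrow>
   (g = g' \<and> g \<in> V \<and> {i, j} \<in> edges (cycle (2*k))) \<or> (i = j \<and> i < 2*k \<and> {g, g'} \<in> edges G)"
proof
  assume "{(g, i), (g', j)} \<in> edges H"
  then consider (a) a h1 h2 where "{(g, i), (g', j)} = {(a, h1), (a, h2)}" "a \<in> V" "{h1, h2} \<in> edges (cycle (2*k))"
    | (b) g1 g2 h where "{(g, i), (g', j)} = {(g1, h), (g2, h)}" "{g1, g2} \<in> edges G" "h < 2*k"
    unfolding edgesH_raw by auto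
  then show "(g = g' \<and> g \<in> V \<and> {i, j} \<in> edges (cycle (2*k))) \<or> (i = j \<and> i < 2*k \<and> {g, g'} \<in> edges G)"
  proof cases
    case a
    then have "g = a" "g' = a" "{i, j} = {h1, h2}" by (auto simp: doubleton_eq_iff)
    then show ?thesis using a by auto
  next
    case b
    then have "i = h" "j = h" "{g, g'} = {g1, g2}" by (auto simp: doubleton_eq_iff)
    then show ?thesis using b by auto
  qed
next
  assume "(g = g' \<and> g \<in> V \<and> {i, j} \<in> edges (cycle (2*k))) \<or> (i = j \<and> i < 2*k \<and> {g, g'} \<in> edges G)"
  then show "{(g, i), (g', j)} \<in> edges H"
  proof
    assume h: "g = g' \<and> g \<in> V \<and> {i, j} \<in> edges (cycle (2*k))"
    then show ?thesis unfolding edgesH_raw by blast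
  next
    assume h: "i = j \<and> i < 2*k \<and> {g, g'} \<in> edges G"
    then show ?thesis unfolding edgesH_raw by fastforce
  qed
qed

lemma edgeH_obtain: assumes "e \<in> edges H" obtains a b where "e = {a, b}"
  using assms unfolding cart_prod_def edges_def by auto

lemma simpleH: "simple_graph H"
  unfolding simple_graph_def
proof (intro conjI ballI)
  show "finite (verts H)" using finV vertsH by simp
  fix e assume e: "e \<in> edges H"
  then obtain a b where ab: "e = {a, b}" by (rule edgeH_obtain)
  obtain g i g' j where a: "a = (g, i)" and b: "b = (g', j)" by (cases a, cases b) auto
  have "{(g, i), (g', j)} \<in> edges H" using e ab a b by simp
  then have "(g = g' \<and> g \<in> V \<and> {i, j} \<in> edges (cycle (2*k))) \<or> (i = j \<and> i < 2*k \<and> {g, g'} \<in> edges G)"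
    using edgesH by blast
  then have "a \<noteq> b \<and> a \<in> verts H \<and> b \<in> verts H"
  proof
    assume h: "g = g' \<and> g \<in> V \<and> {i, j} \<in> edges (cycle (2*k))"
    then have "i < 2*k" "j < 2*k" "j = nx i \<or> i = nx j" using edgesC by auto
    then have "i \<noteq> j" using nx_ne by metis
    then show ?thesis using h \<open>i < 2*k\<close> \<open>j < 2*k\<close> unfolding a b vertsH by auto
  next
    assume h: "i = j \<and> i < 2*k \<and> {g, g'} \<in> edges G"
    then show ?thesis using Gedge[of g g'] unfolding a b vertsH by auto
  qed
  then show "\<exists>u v. u \<noteq> v \<and> u \<in> verts H \<and> v \<in> verts H \<and> e = {u, v}" using ab by blast
qed

definition Sd :: "('a \<times> nat) set" where "Sd = {(g, i). (g \<in> X) = even i}"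

lemma sideH: assumes "{u, v} \<in> edges H" shows "u \<in> Sd \<longleftrightarrow> v \<notin> Sd"
proof -
  obtain g i g' j where a: "u = (g, i)" and b: "v = (g', j)" by (cases u, cases v) auto
  have "(g = g' \<and> g \<in> V \<and> {i, j} \<in> edges (cycle (2*k))) \<or> (i = j \<and> i < 2*k \<and> {g, g'} \<in> edges G)"
    using edgesH assms a b by blast
  then show ?thesis
  proof
    assume h: "g = g' \<and> g \<in> V \<and> {i, j} \<in> edges (cycle (2*k))"
    then have "i < 2*k" "j < 2*k" "j = nx i \<or> i = nx j" using edgesC by auto
    then have "even i \<longleftrightarrow> odd j" using even_nx by auto
    then show ?thesis using h a b unfolding Sd_def by auto
  next
    assume h: "i = j \<and> i < 2*k \<and> {g, g'} \<in> edges G"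
    then show ?thesis using Gedge(4)[of g g'] a b unfolding Sd_def by auto
  qed
qed

definition w :: "nat \<Rightarrow> 'f poly" where "w i = monom 1 i - 1"
definition ww :: "nat \<Rightarrow> nat \<Rightarrow> 'f poly" where "ww r i = (if r = 1 then 1 else w i)"
definition sgm :: "nat \<Rightarrow> 'f poly" where "sgm i = w (nx i) - w (pv i)"
definition bm :: "nat \<Rightarrow> 'f poly" where "bm i = w i - w (nx i)"
definition bp :: "nat \<Rightarrow> 'f poly" where "bp i = w (pv i) - w i"
definition Bc :: "nat \<Rightarrow> nat \<Rightarrow> 'f poly" where
  "Bc i j = (if j = nx i then bp i else 0) + (if j = pv i then bm i else 0)"
definition WW :: "'a \<times> nat \<Rightarrow> 'a \<times> nat \<Rightarrow> 'f poly" where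
  "WW p q = (if snd p = snd q then sgm (snd p) * [:A (fst p) (fst q):] else 0)
          + (if fst p = fst q then Bc (snd p) (snd q) else 0)"
definition kv :: "'a \<times> nat \<Rightarrow> 'a \<times> nat \<Rightarrow> 'f poly" where
  "kv p q = (if even (snd q) then (if fst q = fst p then ww (snd p) (snd q) else 0)
             else [:A (fst q) (fst p):] * ww (snd p) (snd q))"

lemma w_inj: "w i = w j \<Longrightarrow> i = j"
  unfolding w_def by (simp add: monom_eq_iff')

lemma w0: "w 0 = 0" unfolding w_def by (simp add: one_pCons)

lemma w2: "w 2 \<noteq> 0"
proof
  assume "w 2 = 0"
  then have "monom (1::'f) 2 = 1" unfolding w_def by simp
  then have "coeff (monom (1::'f) 2) 2 = coeff (1::'f poly) 2" by simp
  then show False by simp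
qed

lemma key: "sgm i * ww r i + bm i * ww r (pv i) + bp i * ww r (nx i) = 0"
  unfolding sgm_def bm_def bp_def ww_def by (auto simp: algebra_simps)

lemma sgm_nz: "i < 2*k \<Longrightarrow> sgm i \<noteq> 0"
  unfolding sgm_def using w_inj nx_ne_pv by fastforce
lemma bm_nz: "i < 2*k \<Longrightarrow> bm i \<noteq> 0"
  unfolding bm_def using w_inj nx_ne by fastforce
lemma bp_nz: "i < 2*k \<Longrightarrow> bp i \<noteq> 0"
  unfolding bp_def using w_inj pv_ne by fastforce

lemma Bc_nz: "i < 2*k \<Longrightarrow> Bc i j \<noteq> 0 \<longleftrightarrow> j = nx i \<or> j = pv i"
  unfolding Bc_def using nx_ne_pv bm_nz bp_nz by auto

lemma WW_edge: assumes "{p, q} \<in> edges H" shows "WW p q \<noteq> 0"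
proof -
  obtain g i g' j where a: "p = (g, i)" and b: "q = (g', j)" by (cases p, cases q) auto
  have "(g = g' \<and> g \<in> V \<and> {i, j} \<in> edges (cycle (2*k))) \<or> (i = j \<and> i < 2*k \<and> {g, g'} \<in> edges G)"
    using edgesH assms a b by blast
  then show ?thesis
  proof
    assume h: "g = g' \<and> g \<in> V \<and> {i, j} \<in> edges (cycle (2*k))"
    then have "i < 2*k" "j < 2*k" "j = nx i \<or> i = nx j" using edgesC by auto
    then have "i \<noteq> j" "j = nx i \<or> j = pv i" using nx_ne nx_eq_iff by metis+
    then show ?thesis using h Bc_nz[OF \<open>i < 2*k\<close>] a b unfolding WW_def by auto
  next
    assume h: "i = j \<and> i < 2*k \<and> {g, g'} \<in> edges G"
    then have "A g g' \<noteq> 0" "g \<noteq> g'" using Aiff Gedge[of g g'] by auto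
    then show ?thesis using h sgm_nz a b unfolding WW_def by auto
  qed
qed

lemma WW_nz: assumes "p \<in> verts H" "q \<in> verts H" "WW p q \<noteq> 0" shows "{p, q} \<in> edges H"
proof -
  obtain g i g' j where a: "p = (g, i)" and b: "q = (g', j)" by (cases p, cases q) auto
  have ij: "g \<in> V" "g' \<in> V" "i < 2*k" "j < 2*k" using assms a b vertsH by auto
  show ?thesis
  proof (cases "i = j")
    case True
    show ?thesis
    proof (cases "g = g'")
      case True
      have "Bc i i = 0" using Bc_nz[OF ij(3), of i] nx_ne[OF ij(3)] pv_ne[OF ij(3)] by auto
      then show ?thesis using assms(3) a b True \<open>i = j\<close> Adiag ij unfolding WW_def by auto
    next
      case False
      then have "A g g' \<noteq> 0" using assms(3) a b True unfolding WW_def by auto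
      then have "{g, g'} \<in> edges G" using Aiff ij by auto
      then show ?thesis unfolding a b edgesH using True ij by auto
    qed
  next
    case False
    then have "g = g'" "Bc i j \<noteq> 0" using assms(3) a b unfolding WW_def by (auto split: if_splits)
    then have "j = nx i \<or> i = nx j" using Bc_nz[OF ij(3)] nx_eq_iff ij by metis
    then show ?thesis unfolding a b edgesH edgesC using \<open>g = g'\<close> ij by auto
  qed
qed

lemma sumB: assumes "i < 2*k"
  shows "(\<Sum>j\<in>{0..<2*k}. Bc i j * F j) = bp i * F (nx i) + bm i * F (pv i)"
proof -
  have "(\<Sum>j\<in>{0..<2*k}. Bc i j * F j) =
        (\<Sum>j\<in>{0..<2*k}. (if j = nx i then bp i * F j else 0)) + (\<Sum>j\<in>{0..<2*k}. (if j = pv i then bm i * F j else 0))"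
    unfolding sum.distrib[symmetric] by (rule sum.cong) (auto simp: Bc_def distrib_right)
  also have "\<dots> = bp i * F (nx i) + bm i * F (pv i)"
    using nx_lt[OF assms] pv_lt[OF assms] by (simp add: sum.delta)
  finally show ?thesis .
qed

lemma WW_split: assumes "g \<in> V" "i < 2*k"
  shows "(\<Sum>q\<in>verts H. WW (g, i) q * F q) =
     (\<Sum>g'\<in>V. sgm i * [:A g g':] * F (g', i)) + (bp i * F (g, nx i) + bm i * F (g, pv i))"
proof -
  have "(\<Sum>q\<in>verts H. WW (g, i) q * F q) = (\<Sum>g'\<in>V. \<Sum>j\<in>{0..<2*k}. WW (g, i) (g', j) * F (g', j))"
    unfolding vertsH by (simp add: sum.cartesian_product)
  also have "\<dots> = (\<Sum>g'\<in>V. \<Sum>j\<in>{0..<2*k}. (if i = j then sgm i * [:A g g':] * F (g', j) else 0))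
       + (\<Sum>g'\<in>V. \<Sum>j\<in>{0..<2*k}. (if g = g' then Bc i j * F (g', j) else 0))"
    unfolding sum.distrib[symmetric] by (intro sum.cong refl) (auto simp: WW_def distrib_right)
  also have "(\<Sum>g'\<in>V. \<Sum>j\<in>{0..<2*k}. (if i = j then sgm i * [:A g g':] * F (g', j) else 0))
      = (\<Sum>g'\<in>V. sgm i * [:A g g':] * F (g', i))"
    using assms by (simp add: sum.delta)
  also have "(\<Sum>g'\<in>V. \<Sum>j\<in>{0..<2*k}. (if g = g' then Bc i j * F (g', j) else 0))
      = (\<Sum>g'\<in>V. if g = g' then (\<Sum>j\<in>{0..<2*k}. Bc i j * F (g', j)) else 0)"
    by (intro sum.cong refl) auto
  also have "\<dots> = (\<Sum>j\<in>{0..<2*k}. Bc i j * F (g, j))"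
    using assms finV by (simp add: sum.delta)
  also have "\<dots> = bp i * F (g, nx i) + bm i * F (g, pv i)" using sumB[OF assms(2)] by simp
  finally show ?thesis .
qed

lemma kern: assumes "g \<in> V" "i < 2*k" "g0 \<in> V"
  shows "(\<Sum>q\<in>verts H. WW (g, i) q * kv (g0, r) q) = 0"
proof (cases "even i")
  case True
  have o1: "odd (nx i)" "odd (pv i)" using True even_nx even_pv assms(2) by auto
  have "(\<Sum>g'\<in>V. sgm i * [:A g g':] * kv (g0, r) (g', i)) = (\<Sum>g'\<in>V. if g' = g0 then sgm i * [:A g g0:] * ww r i else 0)"
    using True by (intro sum.cong) (auto simp: kv_def)
  also have "\<dots> = sgm i * [:A g g0:] * ww r i" using assms finV by (simp add: sum.delta')
  finally have "(\<Sum>q\<in>verts H. WW (g, i) q * kv (g0, r) q) = 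
     sgm i * [:A g g0:] * ww r i + (bp i * ([:A g g0:] * ww r (nx i)) + bm i * ([:A g g0:] * ww r (pv i)))"
    unfolding WW_split[OF assms(1,2)] using o1 by (simp add: kv_def)
  also have "\<dots> = [:A g g0:] * (sgm i * ww r i + bm i * ww r (pv i) + bp i * ww r (nx i))"
    by (simp add: algebra_simps)
  also have "\<dots> = 0" using key by simp
  finally show ?thesis .
next
  case False
  have e1: "even (nx i)" "even (pv i)" using False even_nx even_pv assms(2) by auto
  have "(\<Sum>g'\<in>V. sgm i * [:A g g':] * kv (g0, r) (g', i)) = (\<Sum>g'\<in>V. sgm i * ww r i * [:A g g' * A g' g0:])"
    using False by (intro sum.cong) (auto simp: kv_def algebra_simps)
  also have "\<dots> = sgm i * ww r i * [:\<Sum>g'\<in>V. A g g' * A g' g0:]"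
    by (simp add: smult_sum)
  also have "\<dots> = (if g = g0 then sgm i * ww r i else 0)" using Ainv assms by (simp add: one_pCons)
  finally have "(\<Sum>q\<in>verts H. WW (g, i) q * kv (g0, r) q) = 
     (if g = g0 then sgm i * ww r i + bm i * ww r (pv i) + bp i * ww r (nx i) else 0)"
    unfolding WW_split[OF assms(1,2)] using e1 by (simp add: kv_def)
  also have "\<dots> = 0" using key by simp
  finally show ?thesis .
qed

lemma restrict_kernel:
  fixes x :: "'a \<times> nat \<Rightarrow> 'f poly"
  assumes ker: "\<And>u. u \<in> verts H \<Longrightarrow> (\<Sum>q\<in>verts H. WW u q * x q) = 0"
    and side: "\<And>u v. {u, v} \<in> edges H \<Longrightarrow> (u \<in> D \<longleftrightarrow> v \<notin> D)"
    and u: "u \<in> verts H"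
  shows "(\<Sum>q\<in>verts H. WW u q * (if q \<in> D then x q else 0)) = 0"
proof -
  have "(\<Sum>q\<in>verts H. WW u q * (if q \<in> D then x q else 0)) =
        (\<Sum>q\<in>verts H. if u \<in> D then 0 else WW u q * x q)"
  proof (rule sum.cong[OF refl])
    fix q assume q: "q \<in> verts H"
    show "WW u q * (if q \<in> D then x q else 0) = (if u \<in> D then 0 else WW u q * x q)"
    proof (cases "WW u q = 0")
      case False
      then have "u \<in> D \<longleftrightarrow> q \<notin> D" using side WW_nz u q by blast
      then show ?thesis by auto
    qed simp
  qed
  also have "\<dots> = 0" using ker[OF u] by (cases "u \<in> D") simp_all
  finally show ?thesis .
qed

lemma finEH: "finite (edges H)"
proof -
  have "edges H \<subseteq> Pow (verts H)" using simpleH unfolding simple_graph_def by auto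
  then show ?thesis using finV vertsH by (simp add: finite_subset)
qed

lemma sum_prod_split: "(\<Sum>p\<in>U \<times> W. F p) = (\<Sum>g\<in>U. \<Sum>r\<in>W. F (g, r))"
  by (simp add: sum.cartesian_product)

lemma lower: assumes pm: "perfect_matching H M" and fs: "forcing_set H M S"
  shows "card V \<le> card S"
proof (rule ccontr)
  assume "\<not> ?thesis"
  then have lt: "card S < card V" by simp
  have SM: "S \<subseteq> M" using fs unfolding forcing_set_def by auto
  have ME: "M \<subseteq> edges H" using pm unfolding perfect_matching_def by auto
  have "S \<subseteq> edges H" using SM ME by auto
  then have finS: "finite S" using finite_subset finEH by auto
  define T where "T = \<Union>S"
  have c2: "card e = 2" if "e \<in> S" for e
  proof -
    have "e \<in> edges H" using that SM ME by auto
    then obtain a b where "a \<noteq> b" "a \<in> verts H" "b \<in> verts H" "e = {a, b}" by (rule simple_edge[OF simpleH])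
    then show ?thesis by simp
  qed
  have "card T \<le> sum card S" unfolding T_def by (rule card_Union_le_sum_card)
  also have "sum card S = sum (\<lambda>_. 2) S" by (rule sum.cong) (auto simp: c2)
  also have "\<dots> = 2 * card S" by simp
  finally have cT: "card T < card (V \<times> {1::nat, 2})" using lt finV by (simp add: card_cartesian_product)
  have "finite e" if "e \<in> S" for e using c2[OF that] by (metis card.infinite zero_neq_numeral)
  then have finT: "finite T" unfolding T_def using finS by blast
  define I where "I = V \<times> {1::nat, 2}"
  have finI: "finite I" unfolding I_def using finV by simp
  have cT': "card T < card I" using cT unfolding I_def .
  from dep_lemma[OF finT finI cT', of kv] obtain c where
    c: "\<exists>p\<in>I. c p \<noteq> 0" "\<forall>t\<in>T. (\<Sum>p\<in>I. c p * kv p t) = 0" by blast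
  define x where "x q = (if q \<in> verts H then (\<Sum>p\<in>I. c p * kv p q) else 0)" for q
  have ker: "(\<Sum>q\<in>verts H. WW u q * x q) = 0" if u: "u \<in> verts H" for u
  proof -
    obtain g i where gi: "u = (g, i)" "g \<in> V" "i < 2*k" using u vertsH by auto
    have "(\<Sum>q\<in>verts H. WW u q * x q) = (\<Sum>q\<in>verts H. \<Sum>p\<in>I. c p * (WW u q * kv p q))"
      unfolding x_def by (intro sum.cong refl) (simp add: sum_distrib_left algebra_simps)
    also have "\<dots> = (\<Sum>p\<in>I. c p * (\<Sum>q\<in>verts H. WW u q * kv p q))"
      by (subst sum.swap) (simp add: sum_distrib_left)
    also have "\<dots> = 0"
    proof (rule sum.neutral, rule ballI)
      fix p assume "p \<in> I"
      then obtain g0 r where "p = (g0, r)" "g0 \<in> V" unfolding I_def by auto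
      then show "c p * (\<Sum>q\<in>verts H. WW u q * kv p q) = 0" using kern gi by simp
    qed
    finally show ?thesis .
  qed
  have xT: "x t = 0" if "t \<in> T" for t using c(2) that unfolding x_def by auto
  have xeven: "x (g, j) = c (g, 1) + c (g, 2) * w j" if "g \<in> V" "j < 2*k" "even j" for g j
  proof -
    have "x (g, j) = (\<Sum>p\<in>V \<times> {1::nat, 2}. c p * kv p (g, j))"
      unfolding x_def I_def using that vertsH by simp
    also have "\<dots> = (\<Sum>g'\<in>V. \<Sum>r\<in>{1::nat, 2}. c (g', r) * kv (g', r) (g, j))"
      by (rule sum_prod_split)
    also have "\<dots> = (\<Sum>g'\<in>V. if g' = g then c (g, 1) + c (g, 2) * w j else 0)"
      by (intro sum.cong refl) (use that in \<open>auto simp: kv_def ww_def\<close>)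
    also have "\<dots> = c (g, 1) + c (g, 2) * w j" using that finV by (simp add: sum.delta')
    finally show ?thesis .
  qed
  obtain q0 where q0: "x q0 \<noteq> 0"
  proof -
    from c(1) obtain g r where gr: "(g, r) \<in> I" "c (g, r) \<noteq> 0" by auto
    have g: "g \<in> V" using gr unfolding I_def by auto
    have x0: "x (g, 0) = c (g, 1)" using xeven[OF g] k2 w0 by simp
    have x2: "x (g, 2) = c (g, 1) + c (g, 2) * w 2" using xeven[OF g] k2 by simp
    show ?thesis
    proof (cases "c (g, 1) = 0")
      case True
      then have "r = 2" "c (g, 2) \<noteq> 0" using gr unfolding I_def by auto
      then have "x (g, 2) \<noteq> 0" using x2 True w2 by simp
      then show ?thesis using that by blast
    next
      case False
      then show ?thesis using that x0 by metis
    qed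
  qed
  have flipD: False if sideD: "\<And>u v. {u, v} \<in> edges H \<Longrightarrow> (u \<in> D \<longleftrightarrow> v \<notin> D)"
     and nz: "(if q0 \<in> D then x q0 else 0) \<noteq> 0" for D
  proof -
    define xD where "xD q = (if q \<in> D then x q else 0)" for q
    have xs: "v \<in> verts H \<and> v \<in> D \<and> v \<notin> \<Union> S" if a: "xD v \<noteq> 0" for v
    proof -
      have 1: "v \<in> D" "x v \<noteq> 0" using a unfolding xD_def by (auto split: if_splits)
      then have "v \<in> verts H" unfolding x_def by (auto split: if_splits)
      moreover have "v \<notin> T" using xT 1 by blast
      ultimately show ?thesis using 1 unfolding T_def by blast
    qed
    have nz': "xD q0 \<noteq> 0" using nz unfolding xD_def .
    have kD: "\<And>u. u \<in> verts H \<Longrightarrow> (\<Sum>v\<in>verts H. WW u v * xD v) = 0"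
      unfolding xD_def using restrict_kernel[OF ker sideD] by blast
    have "\<exists>M'. perfect_matching H M' \<and> S \<subseteq> M' \<and> M' \<noteq> M"
      apply (rule flip[where W=WW and x=xD and Sd=D and zz=q0])
      apply (rule simpleH)
      apply (rule pm)
      apply (rule SM)
      apply (erule sideD)
      apply (erule (2) WW_nz)
      apply (erule WW_edge)
      apply (erule xs)
      apply (rule nz')
      apply (erule kD)
      done
    then obtain M' where "perfect_matching H M'" "S \<subseteq> M'" "M' \<noteq> M" by blast
    then show False using fs unfolding forcing_set_def by blast
  qed
  have sideC: "\<And>u v. {u, v} \<in> edges H \<Longrightarrow> (u \<in> - Sd \<longleftrightarrow> v \<notin> - Sd)" using sideH by auto
  show False
  proof (cases "q0 \<in> Sd")
    case True then show False using flipD[OF sideH] q0 by simp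
  next
    case False then show False using flipD[OF sideC] q0 by simp
  qed
qed

end


context cpsetup begin

definition M0 :: "('a \<times> nat) set set" where
  "M0 = {{p, (fst p, nx (snd p))} | p. p \<in> verts H \<and> p \<in> Sd}"
definition i0 :: "'a \<Rightarrow> nat" where "i0 g = (if g \<in> X then 0 else 1)"
definition S0 :: "('a \<times> nat) set set" where
  "S0 = {{(g, i0 g), (g, nx (i0 g))} | g. g \<in> V}"

lemma XV: "X \<subseteq> V" using XY by auto

lemma nbr: assumes "{(g, i), u} \<in> edges H"
  shows "u = (g, nx i) \<or> u = (g, pv i) \<or> (\<exists>g'. u = (g', i) \<and> {g, g'} \<in> edges G)"
proof -
  obtain g' j where u: "u = (g', j)" by (cases u) auto
  have "(g = g' \<and> g \<in> V \<and> {i, j} \<in> edges (cycle (2*k))) \<or> (i = j \<and> i < 2*k \<and> {g, g'} \<in> edges G)"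
    using edgesH assms u by blast
  then show ?thesis
  proof
    assume h: "g = g' \<and> g \<in> V \<and> {i, j} \<in> edges (cycle (2*k))"
    then have "i < 2*k" "j < 2*k" "j = nx i \<or> i = nx j" using edgesC by auto
    then have "j = nx i \<or> j = pv i" using nx_eq_iff by metis
    then show ?thesis using h u by auto
  qed (use u in auto)
qed

lemma M0_edge: assumes "p \<in> verts H" shows "{p, (fst p, nx (snd p))} \<in> edges H"
proof -
  obtain g i where p: "p = (g, i)" "g \<in> V" "i < 2*k" using assms vertsH by auto
  show ?thesis unfolding p using p nx_lt[OF p(3)] by (simp add: edgesH edgesC)
qed

lemma pm_M0: "perfect_matching H M0"
  unfolding perfect_matching_def
proof (intro conjI ballI)
  show "M0 \<subseteq> edges H" unfolding M0_def using M0_edge by auto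
  fix v assume v: "v \<in> verts H"
  obtain g i where vi: "v = (g, i)" "g \<in> V" "i < 2*k" using v vertsH by auto
  have ex: "\<exists>e. e \<in> M0 \<and> v \<in> e"
  proof (cases "v \<in> Sd")
    case True then show ?thesis unfolding M0_def using v by blast
  next
    case False
    have "(g, pv i) \<in> Sd" using False vi even_pv[OF vi(3)] unfolding Sd_def by auto
    moreover have "(g, pv i) \<in> verts H" using vi pv_lt vertsH by auto
    moreover have "nx (pv i) = i" using nx_pv vi by auto
    ultimately have "{(g, pv i), (g, i)} \<in> M0" unfolding M0_def by force
    then show ?thesis using vi by blast
  qed
  have un: "e1 = e2" if ee: "e1 \<in> M0" "e2 \<in> M0" "v \<in> e1" "v \<in> e2" for e1 e2
  proof -
    obtain p1 where p1: "e1 = {p1, (fst p1, nx (snd p1))}" "p1 \<in> verts H" "p1 \<in> Sd" using ee(1) unfolding M0_def by blast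
    obtain p2 where p2: "e2 = {p2, (fst p2, nx (snd p2))}" "p2 \<in> verts H" "p2 \<in> Sd" using ee(2) unfolding M0_def by blast
    have nS: "(fst p, nx (snd p)) \<notin> Sd" if "p \<in> verts H" "p \<in> Sd" for p
      using that even_nx vertsH unfolding Sd_def by (auto simp: mem_Times_iff)
    show ?thesis
    proof (cases "v \<in> Sd")
      case True
      then have "v = p1" "v = p2" using ee p1 p2 nS by auto
      then show ?thesis using p1 p2 by simp
    next
      case False
      then have "v = (fst p1, nx (snd p1))" "v = (fst p2, nx (snd p2))" using ee p1 p2 by auto
      then have "fst p1 = fst p2" "nx (snd p1) = nx (snd p2)" by auto
      moreover have "snd p1 < 2*k" "snd p2 < 2*k" using p1 p2 vertsH by (auto simp: mem_Times_iff)
      ultimately have "p1 = p2" using pv_nx by (metis prod.collapse)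
      then show ?thesis using p1 p2 by simp
    qed
  qed
  show "\<exists>!e. e \<in> M0 \<and> v \<in> e" using ex un by blast
qed

lemma S0_M0: "S0 \<subseteq> M0"
proof
  fix e assume "e \<in> S0"
  then obtain g where g: "g \<in> V" "e = {(g, i0 g), (g, nx (i0 g))}" unfolding S0_def by auto
  have "(g, i0 g) \<in> verts H" "(g, i0 g) \<in> Sd" using g k2 vertsH unfolding i0_def Sd_def by auto
  then show "e \<in> M0" unfolding M0_def using g by force
qed

lemma card_S0: "card S0 = card V"
proof -
  have "S0 = (\<lambda>g. {(g, i0 g), (g, nx (i0 g))}) ` V" unfolding S0_def by auto
  moreover have "inj_on (\<lambda>g. {(g, i0 g), (g, nx (i0 g))}) V"
    by (rule inj_onI) (auto simp: doubleton_eq_iff)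
  ultimately show ?thesis by (simp add: card_image)
qed

lemma blocked:
  assumes "perfect_matching H M'" "{v, u} \<in> M'" "e1 \<in> M'" "u \<in> e1" "v \<notin> e1" "u \<in> verts H"
  shows False
  using pm_unique[OF assms(1) assms(6) assms(2) assms(3)] assms(4,5) by auto

lemma step:
  assumes pm': "perfect_matching H M'" and S0M: "S0 \<subseteq> M'"
    and r: "even r" "2 \<le> r" "r \<le> 2*k"
    and prevY: "r < 2*k \<Longrightarrow> \<forall>y. y \<in> V \<and> y \<notin> X \<longrightarrow> {(y, (r+2) mod (2*k)), (y, r+1)} \<in> M'"
    and prevX: "r < 2*k \<Longrightarrow> \<forall>x\<in>X. {(x, r+1), (x, r)} \<in> M'"
  shows "(\<forall>y. y \<in> V \<and> y \<notin> X \<longrightarrow> {(y, r mod (2*k)), (y, r - 1)} \<in> M') \<and> (\<forall>x\<in>X. {(x, r - 1), (x, r - 2)} \<in> M')"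
proof -
  define a where "a = r mod (2*k)"
  define b where "b = r - 1"
  define c where "c = r - 2"
  have ME: "M' \<subseteq> edges H" using pm' unfolding perfect_matching_def by auto
  have a_lt: "a < 2*k" "b < 2*k" "c < 2*k" using r k2 unfolding a_def b_def c_def by auto
  have nxb: "nx b = a" using r k2 unfolding nx_def a_def b_def by auto
  have pva: "pv a = b" using r k2 unfolding pv_def a_def b_def by (auto simp: mod_if)
  have pvb: "pv b = c" using r k2 unfolding pv_def b_def c_def by auto
  have S0e: "{(g, i0 g), (g, nx (i0 g))} \<in> M'" if "g \<in> V" for g using S0M that unfolding S0_def by blast
  have nx0: "nx 0 = 1" "nx 1 = 2" using k2 unfolding nx_def by auto
  have partner: "\<exists>u. {v, u} \<in> M' \<and> u \<in> verts H \<and> {v, u} \<in> edges H" if "v \<in> verts H" for v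
    using pm_mate[OF simpleH pm' that] ME by blast
  have Ypart: "{(y, a), (y, b)} \<in> M'" if y: "y \<in> V" "y \<notin> X" for y
  proof -
    have vV: "(y, a) \<in> verts H" using y a_lt vertsH by auto
    obtain u where u: "{(y, a), u} \<in> M'" "u \<in> verts H" "{(y, a), u} \<in> edges H" using partner[OF vV] by blast
    have "u = (y, nx a) \<or> u = (y, pv a) \<or> (\<exists>g'. u = (g', a) \<and> {y, g'} \<in> edges G)"
      using nbr[OF u(3)] .
    moreover have False if "u = (y, nx a)"
    proof (cases "r = 2*k")
      case True
      then have "a = 0" unfolding a_def by simp
      then have "u = (y, 1)" using that nx0 by simp
      moreover have "i0 y = 1" using y unfolding i0_def by simp
      ultimately show False using blocked[OF pm' u(1) S0e[OF y(1)] _ _ u(2)] \<open>a = 0\<close> nx0 k2 by auto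
    next
      case False
      then have ra: "a = r" "r + 2 \<le> 2*k" using r unfolding a_def by auto
      have "nx a = r + 1" using ra unfolding nx_def by auto
      moreover have "(r + 2) mod (2*k) \<noteq> r" using ra r by (cases "r + 2 = 2*k") auto
      ultimately show False using blocked[OF pm' u(1) prevY[rule_format, of y] _ _ u(2)] that ra y False r by auto
    qed
    moreover have False if ex: "\<exists>g'. u = (g', a) \<and> {y, g'} \<in> edges G"
    proof -
      obtain x' where x': "u = (x', a)" "{y, x'} \<in> edges G" using ex by auto
      have "x' \<in> X" "x' \<in> V" "x' \<noteq> y" using Gedge[OF x'(2)] y by auto
      show False
      proof (cases "r = 2*k")
        case True
        then have "a = 0" unfolding a_def by simp
        moreover have "i0 x' = 0" using \<open>x' \<in> X\<close> unfolding i0_def by simp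
        ultimately show False using blocked[OF pm' u(1) S0e[OF \<open>x' \<in> V\<close>] _ _ u(2)] x' \<open>x' \<noteq> y\<close> by auto
      next
        case False
        then have ra: "a = r" using r unfolding a_def by auto
        show False using blocked[OF pm' u(1) prevX[rule_format, of x'] _ _ u(2)] x' ra \<open>x' \<in> X\<close> \<open>x' \<noteq> y\<close> False r by auto
      qed
    qed
    ultimately have "u = (y, b)" using pva by auto
    then show ?thesis using u by simp
  qed
  have Xpart: "{(x, b), (x, c)} \<in> M'" if x: "x \<in> X" for x
  proof -
    have xV: "x \<in> V" using x XV by auto
    have vV: "(x, b) \<in> verts H" using xV a_lt vertsH by auto
    obtain u where u: "{(x, b), u} \<in> M'" "u \<in> verts H" "{(x, b), u} \<in> edges H" using partner[OF vV] by blast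
    have "u = (x, nx b) \<or> u = (x, pv b) \<or> (\<exists>g'. u = (g', b) \<and> {x, g'} \<in> edges G)"
      using nbr[OF u(3)] .
    moreover have False if "u = (x, nx b)"
    proof (cases "r = 2*k")
      case True
      then have "a = 0" "b = 2*k - 1" unfolding a_def b_def by auto
      moreover have "i0 x = 0" using x unfolding i0_def by simp
      moreover have "2*k - Suc 0 \<noteq> Suc 0" "2*k - Suc 0 \<noteq> 0" using k2 by auto
      ultimately show False using blocked[OF pm' u(1) S0e[OF xV] _ _ u(2)] that nxb nx0 by auto
    next
      case False
      then have ra: "a = r" using r unfolding a_def by auto
      have "r - Suc 0 \<noteq> Suc r \<and> r - Suc 0 \<noteq> r" using r by auto
      then show False using blocked[OF pm' u(1) prevX[rule_format, of x] _ _ u(2)] that nxb ra x False r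
        unfolding b_def by auto
    qed
    moreover have False if ex: "\<exists>g'. u = (g', b) \<and> {x, g'} \<in> edges G"
    proof -
      obtain y' where y': "u = (y', b)" "{x, y'} \<in> edges G" using ex by auto
      have "y' \<notin> X" "y' \<in> V" "y' \<noteq> x" using Gedge[OF y'(2)] x by auto
      show False using blocked[OF pm' u(1) Ypart[OF \<open>y' \<in> V\<close> \<open>y' \<notin> X\<close>] _ _ u(2)] y' \<open>y' \<noteq> x\<close> by auto
    qed
    ultimately have "u = (x, c)" using pvb by auto
    then show ?thesis using u by simp
  qed
  show ?thesis using Ypart Xpart unfolding a_def b_def c_def by auto
qed

lemma allQ:
  assumes pm': "perfect_matching H M'" and S0M: "S0 \<subseteq> M'"
  shows "d < k \<Longrightarrow> (\<forall>y. y \<in> V \<and> y \<notin> X \<longrightarrow> {(y, (2*k - 2*d) mod (2*k)), (y, 2*k - 2*d - 1)} \<in> M') \<and>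
     (\<forall>x\<in>X. {(x, 2*k - 2*d - 1), (x, 2*k - 2*d - 2)} \<in> M')"
proof (induction d)
  case 0
  show ?case using step[OF pm' S0M, of "2*k"] k2 by simp
next
  case (Suc d)
  then have IH: "(\<forall>y. y \<in> V \<and> y \<notin> X \<longrightarrow> {(y, (2*k - 2*d) mod (2*k)), (y, 2*k - 2*d - 1)} \<in> M') \<and>
     (\<forall>x\<in>X. {(x, 2*k - 2*d - 1), (x, 2*k - 2*d - 2)} \<in> M')" by simp
  define r where "r = 2*k - 2 * Suc d"
  have r2: "r + 2 = 2*k - 2*d" "r + 1 = 2*k - 2*d - 1" "r = 2*k - 2*d - 2" using Suc.prems unfolding r_def by auto
  have "even r" "2 \<le> r" "r \<le> 2*k" using Suc.prems unfolding r_def by auto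
  from step[OF pm' S0M this] IH r2 show ?case unfolding r_def[symmetric] by auto
qed

lemma pm_sub_eq:
  assumes "perfect_matching H M1" "perfect_matching H M2" "M1 \<subseteq> M2"
  shows "M2 = M1"
proof
  show "M2 \<subseteq> M1"
  proof
    fix e assume e: "e \<in> M2"
    then have "e \<in> edges H" using assms(2) unfolding perfect_matching_def by auto
    then obtain a b where ab: "a \<noteq> b" "a \<in> verts H" "b \<in> verts H" "e = {a, b}" by (rule simple_edge[OF simpleH])
    obtain e0 where e0: "e0 \<in> M1" "a \<in> e0" using assms(1) ab unfolding perfect_matching_def by blast
    have "e0 = e" using pm_unique[OF assms(2) ab(2), of e0 e] e0 assms(3) e ab by auto
    then show "e \<in> M1" using e0 by simp
  qed
qed (use assms in simp)

lemma forcing_M0: "forcing_set H M0 S0"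
  unfolding forcing_set_def
proof (intro conjI allI impI S0_M0)
  fix M' assume a: "perfect_matching H M' \<and> S0 \<subseteq> M'"
  then have pm': "perfect_matching H M'" and S0M: "S0 \<subseteq> M'" by auto
  have "M0 \<subseteq> M'"
  proof
    fix e assume "e \<in> M0"
    then obtain p where p: "e = {p, (fst p, nx (snd p))}" "p \<in> verts H" "p \<in> Sd" unfolding M0_def by blast
    obtain g i where gi: "p = (g, i)" "g \<in> V" "i < 2*k" using p vertsH by auto
    show "e \<in> M'"
    proof (cases "g \<in> X")
      case True
      then have ev: "even i" using p gi unfolding Sd_def by auto
      then have i2: "i + 2 \<le> 2*k" using gi by presburger
      define d where "d = (2*k - i - 2) div 2"
      have d1: "d < k" using ev i2 unfolding d_def by presburger
      have d2: "2*k - 2*d = i + 2" using ev i2 unfolding d_def by presburger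
      note d = d1 d2
      have "{(g, i + 1), (g, i)} \<in> M'" using allQ[OF pm' S0M d(1)] d(2) True by auto
      moreover have "nx i = i + 1" using i2 unfolding nx_def by auto
      ultimately show ?thesis using p gi by (auto simp: insert_commute)
    next
      case False
      then have od: "odd i" using p gi unfolding Sd_def by auto
      then have i2: "i + 1 \<le> 2*k" "i \<ge> 1" using gi by presburger+
      define d where "d = (2*k - i - 1) div 2"
      have d1: "d < k" using od i2 unfolding d_def by presburger
      have d2: "2*k - 2*d = i + 1" using od i2 unfolding d_def by presburger
      note d = d1 d2
      have "{(g, (i + 1) mod (2*k)), (g, i)} \<in> M'" using allQ[OF pm' S0M d(1)] d(2) False gi by auto
      moreover have "(i + 1) mod (2*k) = nx i" using nx_mod gi by simp
      ultimately show ?thesis using p gi by (auto simp: insert_commute)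
    qed
  qed
  then show "M' = M0" using pm_sub_eq[OF pm_M0 pm'] by simp
qed

lemma self_forcing: "perfect_matching H M \<Longrightarrow> forcing_set H M M"
  unfolding forcing_set_def using pm_sub_eq by blast

lemma main: "min_forcing_number H = card V"
proof -
  have fn: "forcing_number H M = card V" if pm: "perfect_matching H M" and ex: "\<exists>S. forcing_set H M S \<and> card S \<le> card V" for M
  proof -
    let ?A = "{card S | S. forcing_set H M S}"
    have "?A \<subseteq> {0..card (edges H)}"
    proof
      fix c assume "c \<in> ?A"
      then obtain S where "c = card S" "forcing_set H M S" by blast
      then have "S \<subseteq> edges H" using pm unfolding forcing_set_def perfect_matching_def by auto
      then show "c \<in> {0..card (edges H)}" using \<open>c = card S\<close> card_mono[OF finEH] by auto
    qed
    then have finA: "finite ?A" using finite_subset by blast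
    obtain S where S: "forcing_set H M S" "card S \<le> card V" using ex by blast
    have "card S \<in> ?A" using S by blast
    moreover have "\<forall>a\<in>?A. card V \<le> a" using lower[OF pm] by blast
    ultimately have "card S = card V" "card V \<in> ?A" using S(2) by force+
    then show ?thesis unfolding forcing_number_def using finA \<open>\<forall>a\<in>?A. card V \<le> a\<close>
      by (intro Min_eqI) auto
  qed
  let ?B = "{forcing_number H M | M. perfect_matching H M}"
  have "?B = forcing_number H ` {M. perfect_matching H M}" by blast
  moreover have "{M. perfect_matching H M} \<subseteq> Pow (edges H)" unfolding perfect_matching_def by auto
  ultimately have finB: "finite ?B" using finEH by (metis finite_Pow_iff finite_imageI finite_subset)
  have "forcing_number H M0 = card V" by (rule fn[OF pm_M0]) (use forcing_M0 card_S0 in auto)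
  then have inB: "card V \<in> ?B" using pm_M0 by (intro CollectI exI[of _ M0]) simp
  have geB: "\<forall>b\<in>?B. card V \<le> b"
  proof
    fix b assume "b \<in> ?B"
    then obtain M where M: "b = forcing_number H M" "perfect_matching H M" by blast
    have "forcing_set H M M" using self_forcing[OF M(2)] .
    let ?A = "{card S | S. forcing_set H M S}"
    have "?A \<subseteq> {0..card (edges H)}"
    proof
      fix c assume "c \<in> ?A"
      then obtain S where "c = card S" "forcing_set H M S" by blast
      then have "S \<subseteq> edges H" using M(2) unfolding forcing_set_def perfect_matching_def by auto
      then show "c \<in> {0..card (edges H)}" using \<open>c = card S\<close> card_mono[OF finEH] by auto
    qed
    then have finA: "finite ?A" using finite_subset by blast
    have neA: "?A \<noteq> {}" using \<open>forcing_set H M M\<close> by blast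
    have "\<forall>a\<in>?A. card V \<le> a" using lower[OF M(2)] by blast
    then have "card V \<le> Min ?A" using finA neA by simp
    then show "card V \<le> b" unfolding M(1) forcing_number_def .
  qed
  show ?thesis unfolding min_forcing_number_def using finB inB geB by (intro Min_eqI) auto
qed

end

theorem theorem2p1:
  fixes G :: "'a graph" and n k :: nat
  assumes "simple_graph G"
    and "bipartite G"
    and "card (verts G) = n"
    and "k \<ge> 2"
    and "(involutory_wadj G :: ('a \<Rightarrow> 'a \<Rightarrow> 'f::field) set) \<noteq> {}"
  shows "min_forcing_number (cart_prod G (cycle (2 * k))) = n"
proof -
  obtain X Y where XY: "X \<union> Y = verts G" "X \<inter> Y = {}" "\<forall>e\<in>edges G. \<exists>a b. a \<in> X \<and> b \<in> Y \<and> e = {a, b}"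
    using assms(2) unfolding bipartite_def by blast
  obtain A :: "'a \<Rightarrow> 'a \<Rightarrow> 'f" where A: "A \<in> involutory_wadj G" using assms(5) by blast
  then have wa: "weighted_adjacency G A" and inv: "involutory (verts G) A"
    unfolding involutory_wadj_def by auto
  interpret cpsetup G X Y A k
    using assms(1,4) XY wa inv by unfold_locales auto
  show ?thesis using main assms(3) by simp
qed


end
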